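(* Every linear operator $A:\mathbb{R}^n\to\mathbb{R}^n$ similar to an operator that is GTP (respectively, GSTP) with respect to some totally positive structure is itself GTP (respectively, GSTP) with respect to some totally positive structure. In particular, if $A$ is similar to an operator with a totally positive (respectively, strictly totally positive) matrix, then $A$ is GTP (respectively, GSTP) with respect to some totally positive structure.
   Context: A proper cone is a closed convex cone that is pointed and solid. $\wedge^j\mathbb{R}^n$ is the $j$th exterior power and $\wedge^jA$ the operator with $(\wedge^jA)(x_1\wedge\cdots\wedge x_j)=Ax_1\wedge\cdots\wedge Ax_j$. $B$ is $K$-nonnegative if $BK\subseteq K$ and $K$-positive if $B(K\setminus\{0\})\subseteq\operatorname{int}K$. A totally positive structure is a family $\{K_1,\ldots,K_n\}$, $K_j\subset\wedge^j\mathbb{R}^n$ a proper cone; $A$ is GTP (GSTP) with respect to it if $\wedge^jA$ is $K_j$-nonnegative ($K_j$-positive) for all $j=1,\ldots,n$. A matrix is totally positive (TP) if all its minors of every order are nonnegative, and strictly totally positive (STP) if all its minors of every order are positive (i.e. all compound matrices are entrywise nonnegative, resp. positive). *)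

theory Defs
  imports "HOL-Analysis.Analysis" "HOL-Combinatorics.Permutations"
begin

text \<open>The operator on R^n is given by its
  matrix A (type real^n^n) in the standard basis e_1,...,e_n, where the
  index type 'n is finite and linearly ordered (the order fixes the ordering of the
  standard basis).  The j-th exterior power is modelled in the basis
  e_I = e_{i_1} wedge ... wedge e_{i_j} (i_1 < ... < i_j, I = {i_1,...,i_j}) as the
  subspace ext_space j of (real, 'n set) vec of vectors supported on j-element sets.\<close>

definition ext_space :: "nat \<Rightarrow> ((real, ('n::finite) set) vec) set" where
  "ext_space j = {v. \<forall>I. card I \<noteq> j \<longrightarrow> v $ I = 0}"

definition minor :: "((real, ('n::{finite,linorder})) vec, 'n) vec \<Rightarrow> 'n set \<Rightarrow> 'n set \<Rightarrow> real" where
  "minor A I J = (\<Sum>p | p permutes {..<card I}. of_int (sign p) *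
       (\<Prod>k<card I. A $ (sorted_list_of_set I ! k) $ (sorted_list_of_set J ! p k)))"

text \<open>Matrix of the j-th exterior power of A with respect to the basis (e_I),
  i.e. the j-th compound matrix (extended by 0 off the j-element index sets).\<close>
definition compound :: "nat \<Rightarrow> ((real, ('n::{finite,linorder})) vec, 'n) vec \<Rightarrow> ((real, 'n set) vec, 'n set) vec" where
  "compound j A = (\<chi> I J. if card I = j \<and> card J = j then minor A I J else 0)"

definition proper_cone_ext :: "nat \<Rightarrow> ((real, ('n::finite) set) vec) set \<Rightarrow> bool" where
  "proper_cone_ext j K \<longleftrightarrow> K \<subseteq> ext_space j \<and> closed K \<and> convex K \<and> cone K \<and>
     K \<inter> uminus ` K = {0} \<and> (top_of_set (ext_space j) interior_of K) \<noteq> {}"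

definition int_ext :: "nat \<Rightarrow> ((real, ('n::finite) set) vec) set \<Rightarrow> ((real, 'n set) vec) set" where
  "int_ext j K = top_of_set (ext_space j) interior_of K"

definition totally_positive_structure :: "(nat \<Rightarrow> ((real, ('n::finite) set) vec) set) \<Rightarrow> bool" where
  "totally_positive_structure K \<longleftrightarrow> (\<forall>j\<in>{1..CARD('n)}. proper_cone_ext j (K j))"

definition K_nonneg :: "real^'m^'m \<Rightarrow> (real^'m) set \<Rightarrow> bool" where
  "K_nonneg B K \<longleftrightarrow> (\<forall>x\<in>K. B *v x \<in> K)"

definition K_pos :: "nat \<Rightarrow> ((real, ('n::finite) set) vec, 'n set) vec \<Rightarrow> ((real, 'n set) vec) set \<Rightarrow> bool" where
  "K_pos j B K \<longleftrightarrow> (\<forall>x\<in>K - {0}. B *v x \<in> int_ext j K)"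

definition GTP :: "((real, ('n::{finite,linorder})) vec, 'n) vec \<Rightarrow> (nat \<Rightarrow> ((real, 'n set) vec) set) \<Rightarrow> bool" where
  "GTP A K \<longleftrightarrow> (\<forall>j\<in>{1..CARD('n)}. K_nonneg (compound j A) (K j))"

definition GSTP :: "((real, ('n::{finite,linorder})) vec, 'n) vec \<Rightarrow> (nat \<Rightarrow> ((real, 'n set) vec) set) \<Rightarrow> bool" where
  "GSTP A K \<longleftrightarrow> (\<forall>j\<in>{1..CARD('n)}. K_pos j (compound j A) (K j))"

definition similar_op :: "((real, ('n::finite)) vec, 'n) vec \<Rightarrow> ((real, 'n) vec, 'n) vec \<Rightarrow> bool" where
  "similar_op A B \<longleftrightarrow> (\<exists>P. invertible P \<and> A = P ** B ** matrix_inv P)"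

definition TP_matrix :: "((real, ('n::{finite,linorder})) vec, 'n) vec \<Rightarrow> bool" where
  "TP_matrix B \<longleftrightarrow> (\<forall>I J::'n set. 1 \<le> card I \<and> card I = card J \<longrightarrow> 0 \<le> minor B I J)"

definition STP_matrix :: "((real, ('n::{finite,linorder})) vec, 'n) vec \<Rightarrow> bool" where
  "STP_matrix B \<longleftrightarrow> (\<forall>I J::'n set. 1 \<le> card I \<and> card I = card J \<longrightarrow> 0 < minor B I J)"

end

theory Submission
  imports Defs
begin


definition ldet :: "nat \<Rightarrow> (nat \<Rightarrow> nat \<Rightarrow> real) \<Rightarrow> real" where
  "ldet m M = (\<Sum>p | p permutes {..<m}. of_int (sign p) * (\<Prod>k<m. M k (p k)))"

lemma ldet_transpose: "ldet m (\<lambda>i j. M j i) = ldet m M"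
proof -
  have "ldet m (\<lambda>i j. M j i) = (\<Sum>p | p permutes {..<m}. of_int (sign (inv p)) * (\<Prod>k<m. M (inv p k) k))"
    unfolding ldet_def by (rule sum_permutations_inverse)
  also have "\<dots> = (\<Sum>p | p permutes {..<m}. of_int (sign p) * (\<Prod>k<m. M k (p k)))"
  proof (rule sum.cong[OF refl])
    fix p assume "p \<in> {p. p permutes {..<m}}"
    then have p: "p permutes {..<m}" by simp
    have "(\<Prod>k<m. M (inv p k) k) = (\<Prod>k<m. M (inv p (p k)) (p k))"
      using prod.permute[OF p, of "\<lambda>k. M (inv p k) k"] by (simp add: o_def)
    also have "\<dots> = (\<Prod>k<m. M k (p k))" using permutes_inverses(2)[OF p] by simp
    finally show "of_int (sign (inv p)) * (\<Prod>k<m. M (inv p k) k) = of_int (sign p) * (\<Prod>k<m. M k (p k))"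
      using sign_inverse[OF permutation_permutes[THEN iffD2]] p by auto
  qed
  finally show ?thesis unfolding ldet_def .
qed

lemma ldet_col_perm:
  assumes s: "s permutes {..<m}"
  shows "ldet m (\<lambda>k l. M k (s l)) = of_int (sign s) * ldet m M"
proof -
  have ps: "permutation s" using s permutation_permutes by blast
  have "ldet m (\<lambda>k l. M k (s l)) = (\<Sum>p | p permutes {..<m}. of_int (sign (inv s \<circ> p)) * (\<Prod>k<m. M k (s ((inv s \<circ> p) k))))"
    unfolding ldet_def by (rule setum_permutations_compose_left[OF permutes_inv[OF s]])
  also have "\<dots> = (\<Sum>p | p permutes {..<m}. of_int (sign s) * (of_int (sign p) * (\<Prod>k<m. M k (p k))))"
  proof (rule sum.cong[OF refl])
    fix p assume "p \<in> {p. p permutes {..<m}}"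
    then have p: "p permutes {..<m}" by simp
    then have pp: "permutation p" using permutation_permutes by blast
    have "sign (inv s \<circ> p) = sign s * sign p"
      using sign_compose[OF permutation_inverse[OF ps] pp] sign_inverse[OF ps] by simp
    moreover have "s ((inv s \<circ> p) k) = p k" for k using permutes_inverses(1)[OF s] by simp
    ultimately show "of_int (sign (inv s \<circ> p)) * (\<Prod>k<m. M k (s ((inv s \<circ> p) k))) = of_int (sign s) * (of_int (sign p) * (\<Prod>k<m. M k (p k)))"
      by simp
  qed
  finally show ?thesis unfolding ldet_def by (simp add: sum_distrib_left)
qed

lemma ldet_row_perm:
  assumes s: "s permutes {..<m}"
  shows "ldet m (\<lambda>k l. M (s k) l) = of_int (sign s) * ldet m M"
proof -
  have "ldet m (\<lambda>k l. M (s k) l) = ldet m (\<lambda>k l. M (s l) k)"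
    by (rule ldet_transpose[symmetric])
  also have "\<dots> = of_int (sign s) * ldet m (\<lambda>k l. M l k)"
    by (rule ldet_col_perm[OF s])
  finally show ?thesis using ldet_transpose[of m M] by simp
qed

lemma ldet_eq_cols:
  assumes "i < m" "j < m" "i \<noteq> j" "\<And>k. M k i = M k j"
  shows "ldet m M = 0"
proof -
  let ?q = "Transposition.transpose i j"
  have q: "?q permutes {..<m}" using assms by (intro permutes_swap_id) auto
  have qq: "permutation ?q" using q permutation_permutes by blast
  have Mq: "M k (?q x) = M k x" for k x using assms(4) by (auto simp: Transposition.transpose_def)
  have "ldet m M = (\<Sum>p | p permutes {..<m}. of_int (sign (?q \<circ> p)) * (\<Prod>k<m. M k ((?q \<circ> p) k)))"
    unfolding ldet_def by (rule setum_permutations_compose_left[OF q])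
  also have "\<dots> = (\<Sum>p | p permutes {..<m}. - (of_int (sign p) * (\<Prod>k<m. M k (p k))))"
  proof (rule sum.cong[OF refl])
    fix p assume "p \<in> {p. p permutes {..<m}}"
    then have pp: "permutation p" using permutation_permutes by blast
    have "sign (?q \<circ> p) = - sign p" using sign_compose[OF qq pp] sign_swap_id[of i j] assms(3) by simp
    then show "of_int (sign (?q \<circ> p)) * (\<Prod>k<m. M k ((?q \<circ> p) k)) = - (of_int (sign p) * (\<Prod>k<m. M k (p k)))"
      by (simp add: Mq)
  qed
  also have "\<dots> = - ldet m M" unfolding ldet_def by (simp add: sum_negf)
  finally show ?thesis by simp
qed

lemma ldet_eq_rows:
  assumes "i < m" "j < m" "i \<noteq> j" "\<And>l. M i l = M j l"
  shows "ldet m M = 0"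
  using ldet_eq_cols[of i m j "\<lambda>k l. M l k"] assms ldet_transpose[of m M] by simp



lemma ldet_cong:
  assumes "\<And>k l. k < m \<Longrightarrow> l < m \<Longrightarrow> M k l = N k l"
  shows "ldet m M = ldet m N"
  unfolding ldet_def
proof (rule sum.cong[OF refl])
  fix p assume "p \<in> {p. p permutes {..<m}}"
  then have p: "p permutes {..<m}" by simp
  have "k < m \<Longrightarrow> p k < m" for k using permutes_in_image[OF p, of k] by simp
  then show "of_int (sign p) * (\<Prod>k<m. M k (p k)) = of_int (sign p) * (\<Prod>k<m. N k (p k))"
    using assms by simp
qed

lemma sorted_facts:
  fixes L :: "'a::linorder set"
  assumes "finite L" "card L = m"
  shows "length (sorted_list_of_set L) = m" "distinct (sorted_list_of_set L)" "set (sorted_list_of_set L) = L"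
  using assms by auto

lemma bij_perm_inj:
  fixes L :: "'n::{finite,linorder} set"
  assumes cL: "card L = m"
  defines "s \<equiv> sorted_list_of_set L"
  shows "bij_betw (\<lambda>\<sigma>. restrict (\<lambda>k. s ! \<sigma> k) {..<m}) {\<sigma>. \<sigma> permutes {..<m}}
           {f \<in> PiE {..<m} (\<lambda>_. UNIV). inj_on f {..<m} \<and> f ` {..<m} = L}"
proof -
  have fL: "finite L" by simp
  have ls: "length s = m" and ds: "distinct s" and ss: "set s = L"
    using sorted_facts[OF fL cL] unfolding s_def by auto
  have nth_inj: "i < m \<Longrightarrow> j < m \<Longrightarrow> s ! i = s ! j \<longleftrightarrow> i = j" for i j
    using nth_eq_iff_index_eq[OF ds] ls by simp
  show ?thesis
  proof (rule bij_betwI')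
    fix \<sigma> \<tau> assume "\<sigma> \<in> {\<sigma>. \<sigma> permutes {..<m}}" "\<tau> \<in> {\<sigma>. \<sigma> permutes {..<m}}"
    then have s1: "\<sigma> permutes {..<m}" and s2: "\<tau> permutes {..<m}" by auto
    have lt: "k < m \<Longrightarrow> \<sigma> k < m \<and> \<tau> k < m" for k
      using permutes_in_image[OF s1, of k] permutes_in_image[OF s2, of k] by simp
    show "(restrict (\<lambda>k. s ! \<sigma> k) {..<m} = restrict (\<lambda>k. s ! \<tau> k) {..<m}) = (\<sigma> = \<tau>)"
    proof
      assume h: "restrict (\<lambda>k. s ! \<sigma> k) {..<m} = restrict (\<lambda>k. s ! \<tau> k) {..<m}"
      show "\<sigma> = \<tau>"
      proof
        fix k show "\<sigma> k = \<tau> k"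
        proof (cases "k < m")
          case True
          then have "s ! \<sigma> k = s ! \<tau> k" using fun_cong[OF h, of k] by simp
          then show ?thesis using nth_inj lt True by blast
        next
          case False
          then show ?thesis using permutes_not_in[OF s1, of k] permutes_not_in[OF s2, of k] by simp
        qed
      qed
    qed simp
  next
    fix \<sigma> assume "\<sigma> \<in> {\<sigma>. \<sigma> permutes {..<m}}"
    then have s1: "\<sigma> permutes {..<m}" by simp
    have lt: "k < m \<Longrightarrow> \<sigma> k < m" for k using permutes_in_image[OF s1, of k] by simp
    have "inj_on (\<lambda>k. s ! \<sigma> k) {..<m}"
    proof (rule inj_onI)
      fix a b assume "a \<in> {..<m}" "b \<in> {..<m}" "s ! \<sigma> a = s ! \<sigma> b"
      then have "\<sigma> a = \<sigma> b" using nth_inj lt by auto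
      then show "a = b" using permutes_inj[OF s1] by (simp add: inj_eq)
    qed
    moreover have "(\<lambda>k. s ! \<sigma> k) ` {..<m} = L"
    proof -
      have "(\<lambda>k. s ! \<sigma> k) ` {..<m} = (\<lambda>i. s ! i) ` (\<sigma> ` {..<m})" by (simp add: image_image)
      also have "\<dots> = (\<lambda>i. s ! i) ` {..<m}" using permutes_image[OF s1] by simp
      also have "\<dots> = set s" using ls by (auto simp: in_set_conv_nth)
      finally show ?thesis using ss by simp
    qed
    ultimately show "restrict (\<lambda>k. s ! \<sigma> k) {..<m} \<in> {f \<in> PiE {..<m} (\<lambda>_. UNIV). inj_on f {..<m} \<and> f ` {..<m} = L}"
      by (simp add: inj_on_restrict_eq)
  next
    fix f assume "f \<in> {f \<in> PiE {..<m} (\<lambda>_. UNIV). inj_on f {..<m} \<and> f ` {..<m} = L}"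
    then have fP: "f \<in> PiE {..<m} (\<lambda>_. UNIV)" and fi: "inj_on f {..<m}" and fim: "f ` {..<m} = L" by auto
    define \<sigma> where "\<sigma> k = (if k < m then (SOME i. i < m \<and> s ! i = f k) else k)" for k
    have fin: "k < m \<Longrightarrow> f k \<in> set s" for k using fim ss by auto
    have ex: "k < m \<Longrightarrow> \<exists>i. i < m \<and> s ! i = f k" for k using fin[of k] ls by (auto simp: in_set_conv_nth)
    have sig2: "k < m \<Longrightarrow> \<sigma> k < m \<and> s ! \<sigma> k = f k" for k
      using someI_ex[OF ex[of k]] by (simp add: \<sigma>_def)
    have sig: "k < m \<Longrightarrow> s ! \<sigma> k = f k" for k using sig2 by blast
    have siglt: "k < m \<Longrightarrow> \<sigma> k < m" for k using sig2 by blast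
    have sinj: "inj_on \<sigma> {..<m}"
    proof (rule inj_onI)
      fix a b assume "a \<in> {..<m}" "b \<in> {..<m}" "\<sigma> a = \<sigma> b"
      then have "f a = f b" using sig by (metis lessThan_iff)
      then show "a = b" using fi \<open>a \<in> {..<m}\<close> \<open>b \<in> {..<m}\<close> by (simp add: inj_on_eq_iff)
    qed
    have "\<sigma> ` {..<m} = {..<m}" using endo_inj_surj[OF finite_lessThan _ sinj] siglt by auto
    then have "bij_betw \<sigma> {..<m} {..<m}" using sinj by (simp add: bij_betw_def)
    then have sp: "\<sigma> permutes {..<m}" by (rule bij_imp_permutes) (simp add: \<sigma>_def)
    have "f = restrict (\<lambda>k. s ! \<sigma> k) {..<m}"
    proof
      fix k show "f k = restrict (\<lambda>k. s ! \<sigma> k) {..<m} k"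
        using sig fP by (cases "k < m") (auto simp: PiE_def extensional_def)
    qed
    then show "\<exists>\<sigma>\<in>{\<sigma>. \<sigma> permutes {..<m}}. f = restrict (\<lambda>k. s ! \<sigma> k) {..<m}"
      using sp by blast
  qed
qed



lemma cauchy_binet_ldet:
  fixes X Y :: "((real, 'n::{finite,linorder}) vec, 'n) vec"
  shows "ldet m (\<lambda>k l. (X ** Y) $ r k $ c l) =
    (\<Sum>L | card L = m. ldet m (\<lambda>k l. X $ r k $ (sorted_list_of_set L ! l)) *
                       ldet m (\<lambda>k l. Y $ (sorted_list_of_set L ! k) $ c l))"
proof -
  let ?F = "PiE {..<m} (\<lambda>_. UNIV :: 'n set)"
  let ?Fi = "{f \<in> ?F. inj_on f {..<m}}"
  let ?g = "\<lambda>f. (\<Prod>k<m. X $ r k $ f k) * ldet m (\<lambda>k l. Y $ f k $ c l)"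
  have "ldet m (\<lambda>k l. (X ** Y) $ r k $ c l) =
     (\<Sum>p | p permutes {..<m}. of_int (sign p) * (\<Prod>k<m. \<Sum>x\<in>UNIV. X $ r k $ x * Y $ x $ c (p k)))"
    by (simp add: ldet_def matrix_matrix_mult_def)
  also have "\<dots> = (\<Sum>p | p permutes {..<m}. of_int (sign p) * (\<Sum>f\<in>?F. \<Prod>k<m. X $ r k $ f k * Y $ f k $ c (p k)))"
    by (subst prod_sum_PiE) auto
  also have "\<dots> = (\<Sum>p | p permutes {..<m}. \<Sum>f\<in>?F. (\<Prod>k<m. X $ r k $ f k) * (of_int (sign p) * (\<Prod>k<m. Y $ f k $ c (p k))))"
    by (simp add: sum_distrib_left prod.distrib mult.left_commute)
  also have "\<dots> = (\<Sum>f\<in>?F. \<Sum>p | p permutes {..<m}. (\<Prod>k<m. X $ r k $ f k) * (of_int (sign p) * (\<Prod>k<m. Y $ f k $ c (p k))))"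
    by (rule sum.swap)
  also have "\<dots> = (\<Sum>f\<in>?F. ?g f)"
    by (simp add: ldet_def sum_distrib_left)
  also have "\<dots> = (\<Sum>f\<in>?Fi. ?g f)"
  proof (rule sum.mono_neutral_right)
    show "finite ?F" by (simp add: finite_PiE)
    show "?Fi \<subseteq> ?F" by auto
    show "\<forall>f\<in>?F - ?Fi. ?g f = 0"
    proof
      fix f assume "f \<in> ?F - ?Fi"
      then obtain i j where "i < m" "j < m" "i \<noteq> j" "f i = f j" unfolding inj_on_def by auto
      then have "ldet m (\<lambda>k l. Y $ f k $ c l) = 0" by (intro ldet_eq_rows[of i m j]) auto
      then show "?g f = 0" by simp
    qed
  qed
  also have "\<dots> = (\<Sum>L | card L = m. \<Sum>f \<in> {f. f \<in> ?Fi \<and> f ` {..<m} = L}. ?g f)"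
  proof (rule sum.group[symmetric])
    show "finite ?Fi" by (simp add: finite_PiE)
    show "finite {L :: 'n set. card L = m}" by (rule finite)
    show "(\<lambda>f. f ` {..<m}) ` ?Fi \<subseteq> {L. card L = m}"
    proof (rule image_subsetI)
      fix f assume "f \<in> ?Fi"
      then have "inj_on f {..<m}" by blast
      then show "f ` {..<m} \<in> {L. card L = m}" using card_image[of f "{..<m}"] by simp
    qed
  qed
  also have "\<dots> = (\<Sum>L | card L = m. ldet m (\<lambda>k l. X $ r k $ (sorted_list_of_set L ! l)) *
                       ldet m (\<lambda>k l. Y $ (sorted_list_of_set L ! k) $ c l))"
  proof (rule sum.cong[OF refl])
    fix L :: "'n set" assume "L \<in> {L. card L = m}"
    then have cL: "card L = m" by simp
    define s where "s = sorted_list_of_set L"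
    have b: "bij_betw (\<lambda>\<sigma>. restrict (\<lambda>k. s ! \<sigma> k) {..<m}) {\<sigma>. \<sigma> permutes {..<m}}
           {f \<in> PiE {..<m} (\<lambda>_. UNIV). inj_on f {..<m} \<and> f ` {..<m} = L}"
      using bij_perm_inj[OF cL] unfolding s_def .
    have eqs: "{f. f \<in> ?Fi \<and> f ` {..<m} = L} = {f \<in> PiE {..<m} (\<lambda>_. UNIV). inj_on f {..<m} \<and> f ` {..<m} = L}"
      by auto
    have "(\<Sum>f \<in> {f. f \<in> ?Fi \<and> f ` {..<m} = L}. ?g f) =
          (\<Sum>\<sigma> | \<sigma> permutes {..<m}. ?g (restrict (\<lambda>k. s ! \<sigma> k) {..<m}))"
      unfolding eqs by (rule sum.reindex_bij_betw[OF b, symmetric])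
    also have "\<dots> = (\<Sum>\<sigma> | \<sigma> permutes {..<m}. (\<Prod>k<m. X $ r k $ (s ! \<sigma> k)) *
                   (of_int (sign \<sigma>) * ldet m (\<lambda>k l. Y $ (s ! k) $ c l)))"
    proof (rule sum.cong[OF refl])
      fix \<sigma> assume "\<sigma> \<in> {\<sigma>. \<sigma> permutes {..<m}}"
      then have sp: "\<sigma> permutes {..<m}" by simp
      have "ldet m (\<lambda>k l. Y $ restrict (\<lambda>k. s ! \<sigma> k) {..<m} k $ c l) = ldet m (\<lambda>k l. Y $ (s ! \<sigma> k) $ c l)"
        by (rule ldet_cong) simp
      also have "\<dots> = of_int (sign \<sigma>) * ldet m (\<lambda>k l. Y $ (s ! k) $ c l)"
        by (rule ldet_row_perm[OF sp, of "\<lambda>k l. Y $ (s ! k) $ c l"])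
      finally show "?g (restrict (\<lambda>k. s ! \<sigma> k) {..<m}) = (\<Prod>k<m. X $ r k $ (s ! \<sigma> k)) *
                   (of_int (sign \<sigma>) * ldet m (\<lambda>k l. Y $ (s ! k) $ c l))"
        by simp
    qed
    also have "\<dots> = (\<Sum>\<sigma> | \<sigma> permutes {..<m}. of_int (sign \<sigma>) * (\<Prod>k<m. X $ r k $ (s ! \<sigma> k))) * ldet m (\<lambda>k l. Y $ (s ! k) $ c l)"
      unfolding sum_distrib_right by (rule sum.cong[OF refl]) (simp add: mult_ac)
    also have "\<dots> = ldet m (\<lambda>k l. X $ r k $ (s ! l)) * ldet m (\<lambda>k l. Y $ (s ! k) $ c l)"
      by (simp only: ldet_def)
    finally show "(\<Sum>f \<in> {f. f \<in> ?Fi \<and> f ` {..<m} = L}. ?g f) =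
        ldet m (\<lambda>k l. X $ r k $ (sorted_list_of_set L ! l)) * ldet m (\<lambda>k l. Y $ (sorted_list_of_set L ! k) $ c l)"
      unfolding s_def .
  qed
  finally show ?thesis .
qed



lemma minor_ldet:
  "minor A I J = ldet (card I) (\<lambda>k l. A $ (sorted_list_of_set I ! k) $ (sorted_list_of_set J ! l))"
  by (simp add: minor_def ldet_def)

lemma compound_mult:
  fixes X Y :: "((real, 'n::{finite,linorder}) vec, 'n) vec"
  shows "compound j (X ** Y) = compound j X ** compound j Y"
proof (rule vec_eq_iff[THEN iffD2], rule allI, rule vec_eq_iff[THEN iffD2], rule allI)
  fix I J :: "'n set"
  show "compound j (X ** Y) $ I $ J = (compound j X ** compound j Y) $ I $ J"
  proof (cases "card I = j \<and> card J = j")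
    case True
    have "(compound j X ** compound j Y) $ I $ J = (\<Sum>L\<in>UNIV. compound j X $ I $ L * compound j Y $ L $ J)"
      by (simp add: matrix_matrix_mult_def)
    also have "\<dots> = (\<Sum>L\<in>UNIV. if card L = j then minor X I L * minor Y L J else 0)"
      using True by (intro sum.cong) (auto simp: compound_def)
    also have "\<dots> = (\<Sum>L | card L = j. minor X I L * minor Y L J)"
      by (simp add: sum.If_cases)
    also have "\<dots> = (\<Sum>L | card L = j. ldet j (\<lambda>k l. X $ (sorted_list_of_set I ! k) $ (sorted_list_of_set L ! l)) *
                       ldet j (\<lambda>k l. Y $ (sorted_list_of_set L ! k) $ (sorted_list_of_set J ! l)))"
      using True by (intro sum.cong refl) (simp add: minor_ldet)
    also have "\<dots> = ldet j (\<lambda>k l. (X ** Y) $ (sorted_list_of_set I ! k) $ (sorted_list_of_set J ! l))"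
      by (rule cauchy_binet_ldet[symmetric])
    also have "\<dots> = compound j (X ** Y) $ I $ J"
      using True by (simp add: compound_def minor_ldet)
    finally show ?thesis ..
  next
    case False
    have z: "compound j X $ I $ L * compound j Y $ L $ J = 0" for L
      using False by (auto simp: compound_def)
    have "(compound j X ** compound j Y) $ I $ J = 0" by (simp add: matrix_matrix_mult_def z)
    moreover have "compound j (X ** Y) $ I $ J = 0" using False by (auto simp: compound_def)
    ultimately show ?thesis by simp
  qed
qed

lemma ldet_zero_row:
  assumes "k < m" "\<And>l. M k l = 0"
  shows "ldet m M = 0"
  unfolding ldet_def
proof (rule sum.neutral, rule ballI)
  fix p show "of_int (sign p) * (\<Prod>k<m. M k (p k)) = 0"
    using assms by (subst prod_zero) auto
qed

lemma ldet_id: "ldet m (\<lambda>k l. if k = l then 1 else 0) = 1"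
proof -
  have "ldet m (\<lambda>k l. if k = l then 1 else 0) = (\<Sum>p | p permutes {..<m}. if p = id then 1 else 0)"
    unfolding ldet_def
  proof (rule sum.cong[OF refl])
    fix p assume "p \<in> {p. p permutes {..<m}}"
    then have p: "p permutes {..<m}" by simp
    show "of_int (sign p) * (\<Prod>k<m. if k = p k then 1 else 0) = (if p = id then 1 else (0::real))"
    proof (cases "p = id")
      case True then show ?thesis by simp
    next
      case False
      then obtain k where k: "p k \<noteq> k" by (auto simp: fun_eq_iff)
      then have "k < m" using permutes_not_in[OF p, of k] by auto
      then have "(\<Prod>k<m. if k = p k then 1 else 0) = (0::real)"
        using k \<open>k < m\<close> by (intro prod_zero) (auto intro!: bexI[of _ k])
      then show ?thesis using False by simp
    qed
  qed
  also have "\<dots> = 1"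
    by (subst sum.delta) (auto simp: finite_permutations permutes_id)
  finally show ?thesis .
qed

lemma compound_id:
  "compound j (mat 1 :: ((real, 'n::{finite,linorder}) vec, 'n) vec) = (\<chi> I J. if I = J \<and> card I = j then 1 else 0)"
proof (rule vec_eq_iff[THEN iffD2], rule allI, rule vec_eq_iff[THEN iffD2], rule allI)
  fix I J :: "'n set"
  show "compound j (mat 1 :: ((real, 'n) vec, 'n) vec) $ I $ J = (\<chi> I J. if I = J \<and> card I = j then 1 else 0) $ I $ J"
  proof (cases "card I = j \<and> card J = j")
    case False then show ?thesis by (auto simp: compound_def)
  next
    case True
    define sI where "sI = sorted_list_of_set I"
    define sJ where "sJ = sorted_list_of_set J"
    have lI: "length sI = j" "distinct sI" "set sI = I" using True unfolding sI_def by auto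
    have lJ: "length sJ = j" "distinct sJ" "set sJ = J" using True unfolding sJ_def by auto
    have m: "minor (mat 1 :: ((real, 'n) vec, 'n) vec) I J = ldet j (\<lambda>k l. if sI ! k = sJ ! l then 1 else 0)"
      using True by (simp add: minor_ldet mat_def sI_def sJ_def)
    show ?thesis
    proof (cases "I = J")
      case True': True
      then have "sI = sJ" unfolding sI_def sJ_def by simp
      then have "ldet j (\<lambda>k l. if sI ! k = sJ ! l then 1 else 0) = ldet j (\<lambda>k l. if k = l then 1 else 0)"
        using lI by (intro ldet_cong) (simp add: nth_eq_iff_index_eq)
      then show ?thesis using m True True' by (simp add: compound_def ldet_id)
    next
      case False
      have "\<not> I \<subseteq> J"
      proof
        assume "I \<subseteq> J"
        then have "I = J" using True by (intro card_subset_eq) auto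
        with False show False by simp
      qed
      then obtain i where i: "i \<in> I" "i \<notin> J" by blast
      then obtain k where k: "k < j" "sI ! k = i" using lI by (auto simp: in_set_conv_nth)
      have "sI ! k \<noteq> sJ ! l" if "l < j" for l using that i k lJ by auto
      then have "ldet j (\<lambda>k l. if sI ! k = sJ ! l then 1 else 0) = ldet j (\<lambda>k' l. if k' = k then 0 else if sI ! k' = sJ ! l then 1 else 0)"
        by (intro ldet_cong) auto
      also have "\<dots> = 0" by (rule ldet_zero_row[OF k(1)]) simp
      finally show ?thesis using m True False by (simp add: compound_def)
    qed
  qed
qed

lemma compound_id_apply:
  assumes "v \<in> ext_space j"
  shows "compound j (mat 1 :: ((real, 'n::{finite,linorder}) vec, 'n) vec) *v v = v"
proof (rule vec_eq_iff[THEN iffD2], rule allI)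
  fix I :: "'n set"
  have "(compound j (mat 1 :: ((real, 'n) vec, 'n) vec) *v v) $ I = (\<Sum>J\<in>UNIV. (if I = J \<and> card I = j then 1 else 0) * v $ J)"
    by (simp add: compound_id matrix_vector_mult_def)
  also have "\<dots> = (if card I = j then v $ I else 0)"
  proof (cases "card I = j")
    case True
    have "(\<Sum>J\<in>UNIV. (if I = J \<and> card I = j then 1 else 0) * v $ J) = (\<Sum>J\<in>UNIV. if I = J then v $ J else 0)"
      using True by (intro sum.cong) auto
    then show ?thesis using True by simp
  next
    case False then show ?thesis by simp
  qed
  also have "\<dots> = v $ I" using assms by (auto simp: ext_space_def)
  finally show "(compound j (mat 1 :: ((real, 'n) vec, 'n) vec) *v v) $ I = v $ I" .
qed

lemma compound_ext_space:
  "compound j (M :: ((real, 'n::{finite,linorder}) vec, 'n) vec) *v x \<in> ext_space j"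
  by (simp add: ext_space_def matrix_vector_mult_def compound_def)



lemma subspace_ext_space: "subspace (ext_space j :: ((real, ('n::finite) set) vec) set)"
  unfolding subspace_def ext_space_def by auto

lemma transfer_cone:
  fixes C D :: "((real, ('n::finite) set) vec, 'n set) vec"
  assumes hS: "\<And>x. C *v x \<in> ext_space j" and gS: "\<And>x. D *v x \<in> ext_space j"
    and gh: "\<And>v. v \<in> ext_space j \<Longrightarrow> D *v (C *v v) = v"
    and hg: "\<And>v. v \<in> ext_space j \<Longrightarrow> C *v (D *v v) = v"
    and K: "proper_cone_ext j K"
  shows "proper_cone_ext j ((\<lambda>x. C *v x) ` K)"
    and "(\<lambda>x. C *v x) ` int_ext j K \<subseteq> int_ext j ((\<lambda>x. C *v x) ` K)"
proof -
  let ?S = "ext_space j :: ((real, 'n set) vec) set"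
  let ?h = "\<lambda>x. C *v x" and ?g = "\<lambda>x. D *v x"
  have KS: "K \<subseteq> ?S" and cK: "closed K" and cvK: "convex K" and coK: "cone K"
    and pK: "K \<inter> uminus ` K = {0}" and iK: "top_of_set ?S interior_of K \<noteq> {}"
    using K unfolding proper_cone_ext_def by auto
  have img: "?h ` T = ?S \<inter> ?g -` T" if "T \<subseteq> ?S" for T
  proof
    show "?h ` T \<subseteq> ?S \<inter> ?g -` T" using that gh hS by auto
    show "?S \<inter> ?g -` T \<subseteq> ?h ` T"
    proof
      fix y assume "y \<in> ?S \<inter> ?g -` T"
      then have "y = ?h (?g y)" "?g y \<in> T" using hg by auto
      then show "y \<in> ?h ` T" by blast
    qed
  qed
  have int_sub: "?h ` (top_of_set ?S interior_of K) \<subseteq> top_of_set ?S interior_of (?h ` K)"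
  proof (rule interior_of_maximal)
    let ?U = "top_of_set ?S interior_of K"
    have US: "?U \<subseteq> K" by (rule interior_of_subset)
    then show "?h ` ?U \<subseteq> ?h ` K" by blast
    have "openin (top_of_set ?S) ?U" by (rule openin_interior_of)
    then have "openin (top_of_set ?S) (?S \<inter> ?g -` ?U)"
      by (intro continuous_openin_preimage[of ?S ?g ?S])
         (auto simp: matrix_vector_mult_linear_continuous_on gS)
    then show "openin (top_of_set ?S) (?h ` ?U)" using img[of ?U] US KS by simp
  qed
  then show "?h ` int_ext j K \<subseteq> int_ext j (?h ` K)" unfolding int_ext_def .
  show "proper_cone_ext j (?h ` K)"
    unfolding proper_cone_ext_def
  proof (intro conjI)
    show "?h ` K \<subseteq> ?S" using hS by auto
    have "closed ?S" by (rule closed_subspace[OF subspace_ext_space])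
    moreover have "closed (?g -` K)"
      by (rule continuous_closed_vimage[OF cK]) (metis continuous_on_eq_continuous_at open_UNIV UNIV_I matrix_vector_mult_linear_continuous_on)
    ultimately show "closed (?h ` K)" using img[OF KS] by (simp add: closed_Int)
    show "convex (?h ` K)" by (rule convex_linear_image[OF matrix_vector_mul_linear cvK])
    show "cone (?h ` K)" unfolding cone_def
    proof (intro ballI allI impI)
      fix y and c :: real assume "y \<in> ?h ` K" "0 \<le> c"
      then obtain x where x: "x \<in> K" "y = ?h x" by blast
      have "c *\<^sub>R y = ?h (c *\<^sub>R x)" using x by (simp add: linear_cmul[OF matrix_vector_mul_linear])
      moreover have "c *\<^sub>R x \<in> K" using coK x \<open>0 \<le> c\<close> unfolding cone_def by blast
      ultimately show "c *\<^sub>R y \<in> ?h ` K" by blast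
    qed
    have zK: "0 \<in> K" using pK by blast
    show "?h ` K \<inter> uminus ` ?h ` K = {0}"
    proof
      show "{0} \<subseteq> ?h ` K \<inter> uminus ` ?h ` K"
      proof -
        have h0: "?h 0 = 0" by (rule matrix_vector_mult_0_right)
        have a: "0 \<in> ?h ` K" using zK h0 by (metis image_eqI)
        then have "0 \<in> uminus ` ?h ` K" by (metis image_eqI minus_zero)
        with a show ?thesis by blast
      qed
      show "?h ` K \<inter> uminus ` ?h ` K \<subseteq> {0}"
      proof
        fix y assume y: "y \<in> ?h ` K \<inter> uminus ` ?h ` K"
        then obtain x z where xz: "x \<in> K" "y = ?h x" "z \<in> K" "y = - ?h z" by blast
        have "?g y = x" using xz gh KS by auto
        moreover have "?g y = - z"
        proof -
          have "?g y = ?g (- ?h z)" using xz by simp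
          also have "\<dots> = - ?g (?h z)" by (rule vec.neg)
          also have "\<dots> = - z" using gh KS xz by auto
          finally show ?thesis .
        qed
        ultimately have "x \<in> K \<inter> uminus ` K" using xz by auto
        then have "x = 0" using pK by blast
        then show "y \<in> {0}" using xz by simp
      qed
    qed
    show "top_of_set ?S interior_of (?h ` K) \<noteq> {}" using int_sub iK by blast
  qed
qed



lemma sim_obtain:
  assumes "similar_op A B"
  obtains P Pi where "P ** Pi = mat 1" "Pi ** P = mat 1" "A = P ** B ** Pi"
proof -
  from assms obtain P where P: "invertible P" "A = P ** B ** matrix_inv P"
    unfolding similar_op_def by blast
  have "P ** matrix_inv P = mat 1 \<and> matrix_inv P ** P = mat 1"
    using P(1) unfolding invertible_def matrix_inv_def by (rule someI_ex)
  then show ?thesis using that P by auto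
qed

lemma sim_transfer:
  fixes A B :: "((real, 'n::{finite,linorder}) vec, 'n) vec"
  assumes "similar_op A B" and K: "totally_positive_structure K"
  shows "\<exists>K'. totally_positive_structure K' \<and> (GTP B K \<longrightarrow> GTP A K') \<and> (GSTP B K \<longrightarrow> GSTP A K')"
proof -
  obtain P Pi where PP: "P ** Pi = mat 1" "Pi ** P = mat 1" "A = P ** B ** Pi"
    using sim_obtain[OF assms(1)] by blast
  define K' where "K' j = (\<lambda>x. compound j P *v x) ` K j" for j
  have hg: "compound j P *v (compound j Pi *v v) = v" if "v \<in> ext_space j" for j v
    using that by (simp add: matrix_vector_mul_assoc compound_mult[symmetric] PP compound_id_apply)
  have gh: "compound j Pi *v (compound j P *v v) = v" if "v \<in> ext_space j" for j v
    using that by (simp add: matrix_vector_mul_assoc compound_mult[symmetric] PP compound_id_apply)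
  have cA: "compound j A = compound j P ** compound j B ** compound j Pi" for j
    using PP(3) by (simp add: compound_mult)
  have act: "compound j A *v (compound j P *v x) = compound j P *v (compound j B *v x)"
    if "x \<in> ext_space j" for j x
  proof -
    have "compound j A *v (compound j P *v x) = (compound j P ** compound j B) *v (compound j Pi *v (compound j P *v x))"
      unfolding cA by (simp add: matrix_vector_mul_assoc matrix_mul_assoc)
    also have "\<dots> = (compound j P ** compound j B) *v x" using gh[OF that] by simp
    also have "\<dots> = compound j P *v (compound j B *v x)" by (simp add: matrix_vector_mul_assoc)
    finally show ?thesis .
  qed
  have tr: "proper_cone_ext j (K' j) \<and> (\<lambda>x. compound j P *v x) ` int_ext j (K j) \<subseteq> int_ext j (K' j)"
    if "proper_cone_ext j (K j)" for j
    using transfer_cone[OF compound_ext_space compound_ext_space gh hg that] unfolding K'_def by blast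
  have Kj: "j \<in> {1..CARD('n)} \<Longrightarrow> proper_cone_ext j (K j)" for j
    using K unfolding totally_positive_structure_def by blast
  have KS: "j \<in> {1..CARD('n)} \<Longrightarrow> K j \<subseteq> ext_space j" for j
    using Kj unfolding proper_cone_ext_def by blast
  have "totally_positive_structure K'"
    unfolding totally_positive_structure_def using tr Kj by blast
  moreover have "GTP B K \<longrightarrow> GTP A K'"
  proof
    assume G: "GTP B K"
    show "GTP A K'"
      unfolding GTP_def K_nonneg_def
    proof (intro ballI)
      fix j y assume j: "j \<in> {1..CARD('n)}" and y: "y \<in> K' j"
      then obtain x where x: "x \<in> K j" "y = compound j P *v x" unfolding K'_def by blast
      have "compound j B *v x \<in> K j" using G j x unfolding GTP_def K_nonneg_def by blast
      then show "compound j A *v y \<in> K' j"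
        using x act[of x j] KS[OF j] unfolding K'_def by auto
    qed
  qed
  moreover have "GSTP B K \<longrightarrow> GSTP A K'"
  proof
    assume G: "GSTP B K"
    show "GSTP A K'"
      unfolding GSTP_def K_pos_def
    proof (intro ballI)
      fix j y assume j: "j \<in> {1..CARD('n)}" and y: "y \<in> K' j - {0}"
      then obtain x where x: "x \<in> K j" "y = compound j P *v x" unfolding K'_def by blast
      have "x \<noteq> 0" using x y by auto
      then have "compound j B *v x \<in> int_ext j (K j)" using G j x unfolding GSTP_def K_pos_def by blast
      then have "compound j P *v (compound j B *v x) \<in> int_ext j (K' j)"
        using tr[OF Kj[OF j]] by blast
      then show "compound j A *v y \<in> int_ext j (K' j)"
        using x act[of x j] KS[OF j] by auto
    qed
  qed
  ultimately show ?thesis by blast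
qed

definition Korth :: "nat \<Rightarrow> ((real, ('n::finite) set) vec) set" where
  "Korth j = {v \<in> ext_space j. \<forall>I. 0 \<le> v $ I}"

lemma Korth_props:
  shows "proper_cone_ext j (Korth j :: ((real, ('n::finite) set) vec) set)"
    and "{v \<in> ext_space j. \<forall>I. card I = j \<longrightarrow> 0 < v $ I} \<subseteq> int_ext j (Korth j :: ((real, ('n::finite) set) vec) set)"
proof -
  let ?K = "Korth j :: ((real, 'n set) vec) set"
  let ?S = "ext_space j :: ((real, 'n set) vec) set"
  let ?P = "{v \<in> ?S. \<forall>I. card I = j \<longrightarrow> 0 < v $ I}"
  have "?P = ?S \<inter> {x. \<forall>i. x $ i \<in> (if card i = j then {0<..} else UNIV)}"
    by auto
  moreover have "open {x :: (real, 'n set) vec. \<forall>i. x $ i \<in> (if card i = j then {0<..} else UNIV)}"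
    by (rule open_vector_box) simp
  ultimately have oP: "openin (top_of_set ?S) ?P" by (simp add: openin_open_Int)
  have PK: "?P \<subseteq> ?K" unfolding Korth_def ext_space_def by auto (metis less_imp_le order_refl)
  have sub: "?P \<subseteq> top_of_set ?S interior_of ?K" by (rule interior_of_maximal[OF PK oP])
  then show "?P \<subseteq> int_ext j (?K)" unfolding int_ext_def .
  have wP: "(\<chi> I. if card I = j then 1 else 0) \<in> ?P" by (simp add: ext_space_def)
  show "proper_cone_ext j (?K :: ((real, ('n::finite) set) vec) set)"
    unfolding proper_cone_ext_def
  proof (intro conjI)
    show "?K \<subseteq> ?S" unfolding Korth_def by blast
    have "?K = ?S \<inter> {x. \<forall>i. 0 \<le> x $ i}" unfolding Korth_def by blast
    moreover have "closed (?S \<inter> {x. \<forall>i. 0 \<le> x $ i})"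
      by (intro closed_Int closed_subspace subspace_ext_space closed_positive_orthant)
    ultimately show "closed (?K)" by simp
    show "convex (?K)" unfolding convex_def Korth_def ext_space_def by auto
    show "cone (?K)" unfolding cone_def Korth_def ext_space_def by auto
    show "?K \<inter> uminus ` ?K = {0}"
    proof
      show "?K \<inter> uminus ` ?K \<subseteq> {0}"
      proof
        fix v assume "v \<in> ?K \<inter> uminus ` ?K"
        then obtain w where "v \<in> ?K" "w \<in> ?K" "v = - w" by blast
        then have "\<forall>I. v $ I = 0" unfolding Korth_def by (auto intro: order.antisym)
        then show "v \<in> {0}" by (simp add: vec_eq_iff)
      qed
      have "(0 :: (real, 'n set) vec) \<in> ?K" unfolding Korth_def ext_space_def by simp
      then show "{0} \<subseteq> ?K \<inter> uminus ` ?K" by (auto intro: image_eqI[of 0 uminus 0])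
    qed
    show "top_of_set ?S interior_of ?K \<noteq> {}" using sub wP by blast
  qed
qed

lemma Korth_tps: "totally_positive_structure (Korth :: nat \<Rightarrow> ((real, ('n::finite) set) vec) set)"
  unfolding totally_positive_structure_def using Korth_props(1) by blast

lemma TP_GTP:
  fixes B :: "((real, 'n::{finite,linorder}) vec, 'n) vec"
  assumes "TP_matrix B"
  shows "GTP B Korth"
  unfolding GTP_def K_nonneg_def
proof (intro ballI)
  fix j and x :: "(real, 'n set) vec" assume j: "j \<in> {1..CARD('n)}" and x: "x \<in> Korth j"
  have nn: "0 \<le> compound j B $ I $ J" for I J
    using assms j unfolding compound_def TP_matrix_def by auto
  have "0 \<le> (compound j B *v x) $ I" for I
    using x nn unfolding matrix_vector_mult_def Korth_def by (auto intro!: sum_nonneg)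
  then show "compound j B *v x \<in> Korth j" unfolding Korth_def using compound_ext_space by blast
qed

lemma STP_GSTP:
  fixes B :: "((real, 'n::{finite,linorder}) vec, 'n) vec"
  assumes "STP_matrix B"
  shows "GSTP B Korth"
  unfolding GSTP_def K_pos_def
proof (intro ballI)
  fix j and x :: "(real, 'n set) vec" assume j: "j \<in> {1..CARD('n)}" and x: "x \<in> Korth j - {0}"
  have pos: "card I = j \<Longrightarrow> card J = j \<Longrightarrow> 0 < compound j B $ I $ J" for I J
    using assms j unfolding compound_def STP_matrix_def by auto
  have nn: "0 \<le> compound j B $ I $ J" for I J
    using pos[of I J] by (auto simp: compound_def)
  obtain J0 where J0: "x $ J0 \<noteq> 0" using x by (auto simp: vec_eq_iff)
  have cJ0: "card J0 = j" using J0 x unfolding Korth_def ext_space_def by auto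
  have xJ0: "0 < x $ J0" using J0 x unfolding Korth_def by (auto simp: order.order_iff_strict)
  have xnn: "0 \<le> x $ J" for J using x unfolding Korth_def by auto
  have "0 < (compound j B *v x) $ I" if "card I = j" for I
    unfolding matrix_vector_mult_def vec_lambda_beta
    by (rule sum_pos2[of UNIV J0]) (auto intro: mult_pos_pos pos that cJ0 xJ0 mult_nonneg_nonneg nn xnn)
  then have "compound j B *v x \<in> {v \<in> ext_space j. \<forall>I. card I = j \<longrightarrow> 0 < v $ I}"
    using compound_ext_space by blast
  then show "compound j B *v x \<in> int_ext j (Korth j)" using Korth_props(2) by blast
qed

theorem proposition17:
  fixes A :: "((real, 'n::{finite,linorder}) vec, 'n) vec"
  shows "((\<exists>B K. similar_op A B \<and> totally_positive_structure K \<and> GTP B K)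
            \<longrightarrow> (\<exists>K'. totally_positive_structure K' \<and> GTP A K'))
       \<and> ((\<exists>B K. similar_op A B \<and> totally_positive_structure K \<and> GSTP B K)
            \<longrightarrow> (\<exists>K'. totally_positive_structure K' \<and> GSTP A K'))
       \<and> ((\<exists>B. similar_op A B \<and> TP_matrix B)
            \<longrightarrow> (\<exists>K'. totally_positive_structure K' \<and> GTP A K'))
       \<and> ((\<exists>B. similar_op A B \<and> STP_matrix B)
            \<longrightarrow> (\<exists>K'. totally_positive_structure K' \<and> GSTP A K'))"
proof (intro conjI impI)
  assume "\<exists>B K. similar_op A B \<and> totally_positive_structure K \<and> GTP B K"
  then obtain B K where "similar_op A B" "totally_positive_structure K" "GTP B K" by blast
  then show "\<exists>K'. totally_positive_structure K' \<and> GTP A K'" using sim_transfer by blast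
next
  assume "\<exists>B K. similar_op A B \<and> totally_positive_structure K \<and> GSTP B K"
  then obtain B K where "similar_op A B" "totally_positive_structure K" "GSTP B K" by blast
  then show "\<exists>K'. totally_positive_structure K' \<and> GSTP A K'" using sim_transfer by blast
next
  assume "\<exists>B. similar_op A B \<and> TP_matrix B"
  then obtain B where "similar_op A B" "TP_matrix B" by blast
  then show "\<exists>K'. totally_positive_structure K' \<and> GTP A K'"
    using sim_transfer[of A B Korth] Korth_tps TP_GTP by blast
next
  assume "\<exists>B. similar_op A B \<and> STP_matrix B"
  then obtain B where "similar_op A B" "STP_matrix B" by blast
  then show "\<exists>K'. totally_positive_structure K' \<and> GSTP A K'"
    using sim_transfer[of A B Korth] Korth_tps STP_GSTP by blast
qed


end
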